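(* Fix $p\in[1,\infty)$ and $r\in[0,\infty]$. For any metric spaces $X$ and $Y$, with $X\times Y$ carrying the maximum metric, there are homotopy equivalences $$\mathrm{VR}^m(X\times Y;r)\simeq \mathrm{VR}^m(X;r)\times \mathrm{VR}^m(Y;r),\qquad \check{C}^m(X\times Y;r)\simeq \check{C}^m(X;r)\times\check{C}^m(Y;r),$$ where the right-hand sides carry the maximum of the metrics of the two factors.
   Context: For a metric space $X$ and $r\in[0,\infty]$: the Vietoris–Rips complex $\mathrm{VR}(X;r)$ is the simplicial complex with vertex set $X$ whose simplices are the nonempty finite subsets of $X$ of diameter at most $r$; the Čech complex $\check{C}(X;r)$ is the simplicial complex with vertex set $X$ whose simplices are the nonempty finite subsets $\sigma\subseteq X$ with $\bigcap_{x\in\sigma}B_r(x)\neq\emptyset$, where $B_r(x)$ is the ball of radius $r$ about $x$ in $X$ (the statement holds with either open or closed balls, fixed throughout). For a simplicial complex $K$ with vertex set $X$, its metric thickening is the set of finitely supported probability measures $\mu=\sum_{i=1}^n\lambda_i\delta_{x_i}$ on $X$ (distinct $x_i$, $\lambda_i>0$, $\sum\lambda_i=1$) with $\{x_1,\dots,x_n\}\in K$, equipped with the $p$-Wasserstein metric $W_p(\mu,\nu)=\inf_\pi\left(\int_{X\times X}d(x,y)^p\,d\pi\right)^{1/p}$ (infimum over couplings $\pi$ of $\mu$ and $\nu$). $\mathrm{VR}^m(X;r)$ and $\check{C}^m(X;r)$ denote the metric thickenings of $\mathrm{VR}(X;r)$ and $\check{C}(X;r)$ respectively. *)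

theory Defs
  imports "HOL-Analysis.Analysis" "HOL-Probability.Probability"
begin

definition max_dist :: "('a \<Rightarrow> 'a \<Rightarrow> real) \<Rightarrow> ('b \<Rightarrow> 'b \<Rightarrow> real) \<Rightarrow> ('a \<times> 'b) \<Rightarrow> ('a \<times> 'b) \<Rightarrow> real"
  where "max_dist d1 d2 = (\<lambda>(x1, y1) (x2, y2). max (d1 x1 x2) (d2 y1 y2))"

definition VR_complex :: "'a set \<Rightarrow> ('a \<Rightarrow> 'a \<Rightarrow> real) \<Rightarrow> ereal \<Rightarrow> 'a set set"
  where "VR_complex M d r =
    {\<sigma>. \<sigma> \<noteq> {} \<and> finite \<sigma> \<and> \<sigma> \<subseteq> M \<and> (\<forall>x\<in>\<sigma>. \<forall>y\<in>\<sigma>. ereal (d x y) \<le> r)}"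

definition metric_ball :: "bool \<Rightarrow> 'a set \<Rightarrow> ('a \<Rightarrow> 'a \<Rightarrow> real) \<Rightarrow> 'a \<Rightarrow> ereal \<Rightarrow> 'a set"
  where "metric_ball cl M d x r =
    {y\<in>M. if cl then ereal (d x y) \<le> r else ereal (d x y) < r}"

definition Cech_complex :: "bool \<Rightarrow> 'a set \<Rightarrow> ('a \<Rightarrow> 'a \<Rightarrow> real) \<Rightarrow> ereal \<Rightarrow> 'a set set"
  where "Cech_complex cl M d r =
    {\<sigma>. \<sigma> \<noteq> {} \<and> finite \<sigma> \<and> \<sigma> \<subseteq> M \<and> (\<Inter>x\<in>\<sigma>. metric_ball cl M d x r) \<noteq> {}}"

definition wasserstein :: "real \<Rightarrow> ('a \<Rightarrow> 'a \<Rightarrow> real) \<Rightarrow> 'a pmf \<Rightarrow> 'a pmf \<Rightarrow> real"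
  where "wasserstein p d \<mu> \<nu> =
    (Inf {measure_pmf.expectation \<pi> (\<lambda>(x, y). d x y powr p) | \<pi>.
           map_pmf fst \<pi> = \<mu> \<and> map_pmf snd \<pi> = \<nu>}) powr (1 / p)"

definition metric_thickening :: "'a set set \<Rightarrow> 'a pmf set"
  where "metric_thickening K = {\<mu>. finite (set_pmf \<mu>) \<and> set_pmf \<mu> \<in> K}"

definition thickening_top :: "real \<Rightarrow> ('a \<Rightarrow> 'a \<Rightarrow> real) \<Rightarrow> 'a set set \<Rightarrow> 'a pmf topology"
  where "thickening_top p d K = Metric_space.mtopology (metric_thickening K) (wasserstein p d)"

definition prod_thickening_top ::
  "real \<Rightarrow> ('a \<Rightarrow> 'a \<Rightarrow> real) \<Rightarrow> 'a set set \<Rightarrow> ('b \<Rightarrow> 'b \<Rightarrow> real) \<Rightarrow> 'b set set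
    \<Rightarrow> ('a pmf \<times> 'b pmf) topology"
  where "prod_thickening_top p d1 K1 d2 K2 =
    Metric_space.mtopology (metric_thickening K1 \<times> metric_thickening K2)
      (max_dist (wasserstein p d1) (wasserstein p d2))"

end

theory Submission
  imports Defs
begin


definition mix :: "real \<Rightarrow> 'a pmf \<Rightarrow> 'a pmf \<Rightarrow> 'a pmf" where
  "mix t a b = bind_pmf (bernoulli_pmf t) (\<lambda>c. if c then a else b)"

lemma pmf_mix: "0 \<le> t \<Longrightarrow> t \<le> 1 \<Longrightarrow> pmf (mix t a b) x = t * pmf a x + (1 - t) * pmf b x"
  unfolding mix_def pmf_bind by simp

lemma set_mix: "set_pmf (mix t a b) \<subseteq> set_pmf a \<union> set_pmf b"
  unfolding mix_def by (auto split: if_splits)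

lemma mix_0[simp]: "mix 0 a b = b"
  by (rule pmf_eqI) (simp add: pmf_mix)
lemma mix_1[simp]: "mix 1 a b = a"
  by (rule pmf_eqI) (simp add: pmf_mix)
lemma mix_same[simp]: "mix t a a = a"
  unfolding mix_def by simp
lemma map_mix: "map_pmf f (mix t a b) = mix t (map_pmf f a) (map_pmf f b)"
  unfolding mix_def map_bind_pmf by (metis (full_types))

lemma expectation_sum:
  fixes f :: "'a \<Rightarrow> real"
  assumes "finite A" "set_pmf \<pi> \<subseteq> A"
  shows "measure_pmf.expectation \<pi> f = (\<Sum>x\<in>A. pmf \<pi> x * f x)"
  using integral_measure_pmf[OF assms(1), of \<pi> f] assms by auto

lemma expectation_mix:
  fixes f :: "'a \<Rightarrow> real"
  assumes "finite (set_pmf a)" "finite (set_pmf b)" "0 \<le> t" "t \<le> 1"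
  shows "measure_pmf.expectation (mix t a b) f = t * measure_pmf.expectation a f + (1-t) * measure_pmf.expectation b f"
proof -
  let ?A = "set_pmf a \<union> set_pmf b"
  have "measure_pmf.expectation (mix t a b) f = (\<Sum>x\<in>?A. pmf (mix t a b) x * f x)"
    using assms set_mix[of t a b] by (intro expectation_sum) auto
  also have "\<dots> = t * (\<Sum>x\<in>?A. pmf a x * f x) + (1-t) * (\<Sum>x\<in>?A. pmf b x * f x)"
    using assms by (simp add: pmf_mix sum_distrib_left sum.distrib[symmetric] algebra_simps)
  also have "\<dots> = t * measure_pmf.expectation a f + (1-t) * measure_pmf.expectation b f"
    using assms by (subst (1 2) expectation_sum[of ?A]) auto
  finally show ?thesis .
qed



lemma powr_le_self: "0 \<le> x \<Longrightarrow> x \<le> 1 \<Longrightarrow> 1 \<le> (p::real) \<Longrightarrow> x powr p \<le> x"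
  by (metis powr_one powr_mono')

lemma convex_powr_nonneg:
  fixes u v l p :: real
  assumes "0 \<le> u" "0 \<le> v" "0 \<le> l" "l \<le> 1" "1 \<le> p"
  shows "(l * u + (1 - l) * v) powr p \<le> l * u powr p + (1 - l) * v powr p"
proof (cases "u = 0 \<or> v = 0")
  case True
  then show ?thesis
  proof
    assume "u = 0"
    have "(v * (1 - l)) powr p = (1 - l) powr p * v powr p" using assms by (simp add: powr_mult)
    also have "\<dots> \<le> (1 - l) * v powr p" using assms powr_le_self[of "1-l" p]
      by (intro mult_right_mono) auto
    finally show ?thesis using \<open>u = 0\<close> assms by (simp add: mult.commute)
  next
    assume "v = 0"
    have "(l*u) powr p = l powr p * u powr p" using assms by (simp add: powr_mult)
    also have "\<dots> \<le> l * u powr p" using assms powr_le_self[of "l" p]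
      by (intro mult_right_mono) auto
    finally show ?thesis using \<open>v = 0\<close> assms by simp
  qed
next
  case False
  then have "u > 0" "v > 0" using assms by auto
  from convex_onD[OF powr_convex[OF assms(5)], of "1-l" u v] show ?thesis
    using assms \<open>u>0\<close> \<open>v>0\<close> by (simp add: algebra_simps)
qed

lemma powr_inv_powr: "0 \<le> x \<Longrightarrow> 0 < (p::real) \<Longrightarrow> (x powr (1/p)) powr p = x"
  by (simp add: powr_powr)

lemma minkowski:
  fixes w a b :: "'x \<Rightarrow> real" and p :: real
  assumes A: "finite A" and nn: "\<And>x. x\<in>A \<Longrightarrow> 0 \<le> w x" "\<And>x. x\<in>A \<Longrightarrow> 0 \<le> a x" "\<And>x. x\<in>A \<Longrightarrow> 0 \<le> b x"
    and p: "1 \<le> p"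
  shows "(\<Sum>x\<in>A. w x * (a x + b x) powr p)
     \<le> ((\<Sum>x\<in>A. w x * a x powr p) powr (1/p) + (\<Sum>x\<in>A. w x * b x powr p) powr (1/p)) powr p"
proof -
  define SA where "SA = (\<Sum>x\<in>A. w x * a x powr p)"
  define SB where "SB = (\<Sum>x\<in>A. w x * b x powr p)"
  define \<alpha> where "\<alpha> = SA powr (1/p)"
  define \<beta> where "\<beta> = SB powr (1/p)"
  have SA0: "0 \<le> SA" unfolding SA_def using nn by (auto intro!: sum_nonneg)
  have SB0: "0 \<le> SB" unfolding SB_def using nn by (auto intro!: sum_nonneg)
  have aSA: "\<alpha> powr p = SA" unfolding \<alpha>_def using SA0 p by (simp add: powr_inv_powr)
  have bSB: "\<beta> powr p = SB" unfolding \<beta>_def using SB0 p by (simp add: powr_inv_powr)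
  have a0: "\<alpha> \<ge> 0" "\<beta> \<ge> 0" unfolding \<alpha>_def \<beta>_def by auto
  show ?thesis
  proof (cases "\<alpha> = 0 \<or> \<beta> = 0")
    case True
    then show ?thesis
    proof
      assume "\<alpha> = 0"
      then have "SA = 0" unfolding \<alpha>_def using SA0 by simp
      then have z: "\<forall>x\<in>A. w x * a x powr p = 0"
        using sum_nonneg_eq_0_iff[OF A, of "\<lambda>x. w x * a x powr p"] nn unfolding SA_def by (metis mult_nonneg_nonneg powr_ge_zero)
      have "(\<Sum>x\<in>A. w x * (a x + b x) powr p) = SB" unfolding SB_def
        using z by (intro sum.cong) auto
      then show ?thesis using \<open>\<alpha> = 0\<close> bSB by (simp add: \<beta>_def[symmetric] SB_def[symmetric] \<alpha>_def[symmetric] SA_def[symmetric])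
    next
      assume "\<beta> = 0"
      then have "SB = 0" unfolding \<beta>_def using SB0 by simp
      then have z: "\<forall>x\<in>A. w x * b x powr p = 0"
        using sum_nonneg_eq_0_iff[OF A, of "\<lambda>x. w x * b x powr p"] nn unfolding SB_def by (metis mult_nonneg_nonneg powr_ge_zero)
      have "(\<Sum>x\<in>A. w x * (a x + b x) powr p) = SA" unfolding SA_def
        using z by (intro sum.cong) auto
      then show ?thesis using \<open>\<beta> = 0\<close> aSA by (simp add: \<beta>_def[symmetric] SB_def[symmetric] \<alpha>_def[symmetric] SA_def[symmetric])
    qed
  next
    case False
    then have pos: "\<alpha> > 0" "\<beta> > 0" using a0 by auto
    define l where "l = \<alpha> / (\<alpha> + \<beta>)"
    have l: "0 \<le> l" "l \<le> 1" "1 - l = \<beta> / (\<alpha>+\<beta>)" unfolding l_def using pos by (auto simp: field_simps)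
    have pt: "w x * (a x + b x) powr p \<le> (\<alpha>+\<beta>) powr p * (l * (w x * a x powr p) / SA + (1 - l) * (w x * b x powr p) / SB)"
      if x: "x \<in> A" for x
    proof -
      have e1: "l * (a x / \<alpha>) = a x / (\<alpha>+\<beta>)" using pos by (simp add: l_def field_simps)
      have e2: "(1 - l) * (b x / \<beta>) = b x / (\<alpha>+\<beta>)" using pos by (simp add: l(3) field_simps)
      have "a x + b x = (\<alpha>+\<beta>) * (l * (a x / \<alpha>) + (1 - l) * (b x / \<beta>))"
        unfolding e1 e2 add_divide_distrib[symmetric] using pos by simp
      then have "(a x + b x) powr p = (\<alpha>+\<beta>) powr p * (l * (a x / \<alpha>) + (1 - l) * (b x / \<beta>)) powr p"
        using pos l nn x by (simp add: powr_mult)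
      also have "\<dots> \<le> (\<alpha>+\<beta>) powr p * (l * (a x / \<alpha>) powr p + (1 - l) * (b x / \<beta>) powr p)"
        using pos l nn x p by (intro mult_left_mono convex_powr_nonneg) auto
      also have "\<dots> = (\<alpha>+\<beta>) powr p * (l * a x powr p / SA + (1 - l) * b x powr p / SB)"
        using pos nn x by (simp add: powr_divide aSA bSB)
      finally have "w x * (a x + b x) powr p \<le> w x * ((\<alpha>+\<beta>) powr p * (l * a x powr p / SA + (1 - l) * b x powr p / SB))"
        using nn x by (intro mult_left_mono) auto
      then show ?thesis by (simp add: ring_distribs mult_ac)
    qed
    have "(\<Sum>x\<in>A. w x * (a x + b x) powr p) \<le> (\<Sum>x\<in>A. (\<alpha>+\<beta>) powr p * (l * (w x * a x powr p) / SA + (1 - l) * (w x * b x powr p) / SB))"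
      using pt by (intro sum_mono) auto
    also have "\<dots> = (\<Sum>x\<in>A. ((\<alpha>+\<beta>) powr p * (l / SA)) * (w x * a x powr p) + ((\<alpha>+\<beta>) powr p * ((1 - l) / SB)) * (w x * b x powr p))"
      by (intro sum.cong refl) (simp add: divide_inverse algebra_simps)
    also have "\<dots> = ((\<alpha>+\<beta>) powr p * (l / SA)) * SA + ((\<alpha>+\<beta>) powr p * ((1 - l) / SB)) * SB"
      unfolding SA_def SB_def sum.distrib sum_distrib_left[symmetric] ..
    also have "\<dots> = (\<alpha>+\<beta>) powr p * (l * SA / SA + (1 - l) * SB / SB)"
      by (simp add: algebra_simps)
    also have "\<dots> = (\<alpha>+\<beta>) powr p"
      using pos aSA bSB by (simp flip: aSA bSB)
    finally show ?thesis unfolding \<alpha>_def \<beta>_def SA_def SB_def .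
  qed
qed



abbreviation cost :: "real \<Rightarrow> ('a \<Rightarrow> 'a \<Rightarrow> real) \<Rightarrow> ('a \<times> 'a) pmf \<Rightarrow> real" where
  "cost p d \<pi> \<equiv> measure_pmf.expectation \<pi> (\<lambda>(x, y). d x y powr p)"

definition Wpp :: "real \<Rightarrow> ('a \<Rightarrow> 'a \<Rightarrow> real) \<Rightarrow> 'a pmf \<Rightarrow> 'a pmf \<Rightarrow> real" where
  "Wpp p d \<mu> \<nu> = Inf {measure_pmf.expectation \<pi> (\<lambda>(x, y). d x y powr p) | \<pi>.
           map_pmf fst \<pi> = \<mu> \<and> map_pmf snd \<pi> = \<nu>}"

lemma W_eq: "wasserstein p d \<mu> \<nu> = Wpp p d \<mu> \<nu> powr (1/p)"
  unfolding wasserstein_def Wpp_def ..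

lemma cost_nonneg: "0 \<le> cost p d \<pi>"
  by (rule integral_nonneg_AE) (auto simp: split_beta)

lemma Wpp_le_cost: "map_pmf fst \<pi> = \<mu> \<Longrightarrow> map_pmf snd \<pi> = \<nu> \<Longrightarrow> Wpp p d \<mu> \<nu> \<le> cost p d \<pi>"
  unfolding Wpp_def by (rule cInf_lower) (auto intro!: bdd_belowI[of _ 0] cost_nonneg)

lemma Wpp_set_ne: "{measure_pmf.expectation \<pi> (\<lambda>(x, y). d x y powr p) | \<pi>.
           map_pmf fst \<pi> = \<mu> \<and> map_pmf snd \<pi> = \<nu>} \<noteq> {}"
  using map_fst_pair_pmf[of \<mu> \<nu>] map_snd_pair_pmf[of \<mu> \<nu>] by blast

lemma Wpp_nonneg: "0 \<le> Wpp p d \<mu> \<nu>"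
  unfolding Wpp_def by (rule cInf_greatest[OF Wpp_set_ne]) (auto intro!: cost_nonneg)

lemma W_nonneg: "0 \<le> wasserstein p d \<mu> \<nu>"
  unfolding W_eq by simp

lemma Wpp_approx:
  assumes "0 < e"
  shows "\<exists>\<pi>. map_pmf fst \<pi> = \<mu> \<and> map_pmf snd \<pi> = \<nu> \<and> cost p d \<pi> < Wpp p d \<mu> \<nu> + e"
proof -
  have "Inf {measure_pmf.expectation \<pi> (\<lambda>(x, y). d x y powr p) | \<pi>.
           map_pmf fst \<pi> = \<mu> \<and> map_pmf snd \<pi> = \<nu>} < Wpp p d \<mu> \<nu> + e"
    using assms unfolding Wpp_def by simp
  then show ?thesis
    by (subst (asm) cInf_less_iff[OF Wpp_set_ne]) (auto intro!: bdd_belowI[of _ 0] cost_nonneg)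
qed

lemma Wpp_leI:
  assumes "\<And>e. 0 < e \<Longrightarrow> \<exists>\<pi>. map_pmf fst \<pi> = \<mu> \<and> map_pmf snd \<pi> = \<nu> \<and> cost p d \<pi> \<le> B + e"
  shows "Wpp p d \<mu> \<nu> \<le> B"
proof (rule field_le_epsilon)
  fix e :: real assume "0 < e"
  then obtain \<pi> where "map_pmf fst \<pi> = \<mu>" "map_pmf snd \<pi> = \<nu>" "cost p d \<pi> \<le> B + e"
    using assms by blast
  then show "Wpp p d \<mu> \<nu> \<le> B + e" using Wpp_le_cost[of \<pi> \<mu> \<nu> p d] by linarith
qed

lemma coupling_set: "map_pmf fst \<pi> = \<mu> \<Longrightarrow> map_pmf snd \<pi> = \<nu> \<Longrightarrow> set_pmf \<pi> \<subseteq> set_pmf \<mu> \<times> set_pmf \<nu>"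
  by (force intro: rev_image_eqI)+

lemma coupling_finite:
  assumes "map_pmf fst \<pi> = \<mu>" "map_pmf snd \<pi> = \<nu>" "finite (set_pmf \<mu>)" "finite (set_pmf \<nu>)"
  shows "finite (set_pmf \<pi>)"
  using coupling_set[OF assms(1,2)] assms(3,4) by (meson finite_SigmaI finite_subset)

lemma powr_lt_iff_pow:
  fixes x e p :: real
  assumes "0 \<le> x" "0 < e" "0 < p"
  shows "x powr (1/p) < e \<longleftrightarrow> x < e powr p"
proof
  assume "x powr (1/p) < e"
  then have "(x powr (1/p)) powr p < e powr p" using assms by (intro powr_less_mono2) auto
  then show "x < e powr p" using assms by (simp add: powr_inv_powr)
next
  assume "x < e powr p"
  then have "x powr (1/p) < (e powr p) powr (1/p)" using assms by (intro powr_less_mono2) auto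
  then show "x powr (1/p) < e" using assms by (simp add: powr_powr)
qed

lemma W_lt_iff: "0 < e \<Longrightarrow> 0 < p \<Longrightarrow> wasserstein p d \<mu> \<nu> < e \<longleftrightarrow> Wpp p d \<mu> \<nu> < e powr p"
  unfolding W_eq by (rule powr_lt_iff_pow) (auto simp: Wpp_nonneg)

lemma W_approx:
  assumes "0 < e" "0 < p"
  shows "\<exists>\<pi>. map_pmf fst \<pi> = \<mu> \<and> map_pmf snd \<pi> = \<nu> \<and> cost p d \<pi> powr (1/p) < wasserstein p d \<mu> \<nu> + e"
proof -
  let ?W = "wasserstein p d \<mu> \<nu>"
  have "?W < ?W + e" using assms by simp
  then have lt: "Wpp p d \<mu> \<nu> < (?W + e) powr p"
    using W_lt_iff[of "?W + e" p d \<mu> \<nu>] assms W_nonneg[of p d \<mu> \<nu>] by simp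
  obtain \<pi> where \<pi>: "map_pmf fst \<pi> = \<mu>" "map_pmf snd \<pi> = \<nu>" "cost p d \<pi> < Wpp p d \<mu> \<nu> + ((?W + e) powr p - Wpp p d \<mu> \<nu>)"
    using Wpp_approx[where e="(?W + e) powr p - Wpp p d \<mu> \<nu>" and p=p and d=d and \<mu>=\<mu> and \<nu>=\<nu>] lt by auto
  then have "cost p d \<pi> powr (1/p) < ?W + e"
    using assms W_nonneg[of p d \<mu> \<nu>] by (subst powr_lt_iff_pow) (auto intro: add_nonneg_pos cost_nonneg)
  with \<pi> show ?thesis by blast
qed

lemma Wpp_commute:
  assumes "\<And>x y. d x y = d y x"
  shows "Wpp p d \<mu> \<nu> = Wpp p d \<nu> \<mu>"
proof -
  have *: "Wpp p d a b \<le> Wpp p d b a" for a b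
  proof (rule Wpp_leI)
    fix e :: real assume "0 < e"
    then obtain \<pi> where \<pi>: "map_pmf fst \<pi> = b" "map_pmf snd \<pi> = a" "cost p d \<pi> < Wpp p d b a + e"
      using Wpp_approx by blast
    have eq: "(\<lambda>q. d (snd q) (fst q) powr p) = (\<lambda>(x,y). d x y powr p)"
      by (auto simp: fun_eq_iff assms)
    have "cost p d (map_pmf prod.swap \<pi>) = measure_pmf.expectation \<pi> (\<lambda>q. d (snd q) (fst q) powr p)"
      by (simp add: split_beta)
    also have "\<dots> = cost p d \<pi>" unfolding eq ..
    finally have "cost p d (map_pmf prod.swap \<pi>) = cost p d \<pi>" .
    moreover have "map_pmf fst (map_pmf prod.swap \<pi>) = a" "map_pmf snd (map_pmf prod.swap \<pi>) = b"
      using \<pi> by (simp_all add: pmf.map_comp comp_def)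
    ultimately show "\<exists>\<pi>. map_pmf fst \<pi> = a \<and> map_pmf snd \<pi> = b \<and> cost p d \<pi> \<le> Wpp p d b a + e"
      using \<pi> by (metis less_imp_le)
  qed
  show ?thesis using *[of \<mu> \<nu>] *[of \<nu> \<mu>] by simp
qed



lemma glue:
  assumes "map_pmf snd \<pi>1 = \<nu>" "map_pmf fst \<pi>2 = \<nu>"
  obtains P where "map_pmf fst P = \<pi>1" "map_pmf snd P = \<pi>2" "\<And>q. q \<in> set_pmf P \<Longrightarrow> snd (fst q) = fst (snd q)"
proof -
  have r1: "rel_pmf (\<lambda>q y. snd q = y) \<pi>1 \<nu>"
    by (rule rel_pmf.intros[where pq="map_pmf (\<lambda>q. (q, snd q)) \<pi>1"]) (auto simp: pmf.map_comp comp_def assms)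
  have r2: "rel_pmf (\<lambda>y q. y = fst q) \<nu> \<pi>2"
    by (rule rel_pmf.intros[where pq="map_pmf (\<lambda>q. (fst q, q)) \<pi>2"]) (auto simp: pmf.map_comp comp_def assms)
  have "rel_pmf ((\<lambda>q y. snd q = y) OO (\<lambda>y q. y = fst q)) \<pi>1 \<pi>2"
    unfolding pmf.rel_compp relcompp_apply using r1 r2 by blast
  then show thesis
  proof (cases rule: rel_pmf.cases)
    case (1 pq)
    then show ?thesis using that[of pq] by fastforce
  qed
qed

definition FS :: "'a set \<Rightarrow> 'a pmf set" where
  "FS S = {\<mu>. finite (set_pmf \<mu>) \<and> set_pmf \<mu> \<subseteq> S}"

lemma powr_powr_inv: "0 \<le> x \<Longrightarrow> 0 < (p::real) \<Longrightarrow> (x powr p) powr (1/p) = x"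
  by (simp add: powr_powr)

lemma W_triangle_cpl:
  assumes MS: "Metric_space S d" and p: "1 \<le> p"
    and FS: "\<mu> \<in> FS S" "\<nu> \<in> FS S" "\<rho> \<in> FS S"
    and c1: "map_pmf fst \<pi>1 = \<mu>" "map_pmf snd \<pi>1 = \<nu>"
    and c2: "map_pmf fst \<pi>2 = \<nu>" "map_pmf snd \<pi>2 = \<rho>"
  shows "wasserstein p d \<mu> \<rho> \<le> cost p d \<pi>1 powr (1/p) + cost p d \<pi>2 powr (1/p)"
proof -
  interpret Metric_space S d by (rule MS)
  have FS': "set_pmf \<mu> \<subseteq> S" "set_pmf \<nu> \<subseteq> S" "set_pmf \<rho> \<subseteq> S" using FS by (auto simp: FS_def)
  obtain P where P: "map_pmf fst P = \<pi>1" "map_pmf snd P = \<pi>2" "\<And>q. q \<in> set_pmf P \<Longrightarrow> snd (fst q) = fst (snd q)"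
    using glue[OF c1(2) c2(1)] by blast
  have fin1: "finite (set_pmf \<pi>1)" using coupling_finite[OF c1] FS by (auto simp: FS_def)
  have fin2: "finite (set_pmf \<pi>2)" using coupling_finite[OF c2] FS by (auto simp: FS_def)
  have finP: "finite (set_pmf P)" using coupling_finite[OF P(1,2) fin1 fin2] .
  define \<kappa> where "\<kappa> = map_pmf (\<lambda>q. (fst (fst q), snd (snd q))) P"
  have k1: "map_pmf fst \<kappa> = \<mu>"
  proof -
    have "map_pmf fst \<kappa> = map_pmf fst (map_pmf fst P)" by (simp add: \<kappa>_def pmf.map_comp comp_def)
    then show ?thesis using P c1 by simp
  qed
  have k2: "map_pmf snd \<kappa> = \<rho>"
  proof -
    have "map_pmf snd \<kappa> = map_pmf snd (map_pmf snd P)" by (simp add: \<kappa>_def pmf.map_comp comp_def)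
    then show ?thesis using P c2 by simp
  qed
  have inS: "fst (fst q) \<in> S" "snd (fst q) \<in> S" "snd (snd q) \<in> S" if "q \<in> set_pmf P" for q
  proof -
    have "fst q \<in> set_pmf \<pi>1" "snd q \<in> set_pmf \<pi>2" using that P(1,2) by force+
    then show "fst (fst q) \<in> S" "snd (fst q) \<in> S" "snd (snd q) \<in> S"
      using coupling_set[OF c1] coupling_set[OF c2] FS' by (auto simp: mem_Times_iff dest!: subsetD)
  qed
  define a :: "('a \<times> 'a) \<times> ('a \<times> 'a) \<Rightarrow> real" where "a q = d (fst (fst q)) (snd (fst q))" for q
  define b :: "('a \<times> 'a) \<times> ('a \<times> 'a) \<Rightarrow> real" where "b q = d (fst (snd q)) (snd (snd q))" for q
  have ca: "cost p d \<pi>1 = (\<Sum>q\<in>set_pmf P. pmf P q * a q powr p)"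
  proof -
    have "cost p d \<pi>1 = measure_pmf.expectation P (\<lambda>q. a q powr p)"
      by (subst P(1)[symmetric]) (simp add: a_def split_beta)
    also have "\<dots> = (\<Sum>q\<in>set_pmf P. pmf P q * a q powr p)" by (rule expectation_sum[OF finP]) auto
    finally show ?thesis .
  qed
  have cb: "cost p d \<pi>2 = (\<Sum>q\<in>set_pmf P. pmf P q * b q powr p)"
  proof -
    have "cost p d \<pi>2 = measure_pmf.expectation P (\<lambda>q. b q powr p)"
      by (subst P(2)[symmetric]) (simp add: b_def split_beta)
    also have "\<dots> = (\<Sum>q\<in>set_pmf P. pmf P q * b q powr p)" by (rule expectation_sum[OF finP]) auto
    finally show ?thesis .
  qed
  have "Wpp p d \<mu> \<rho> \<le> cost p d \<kappa>" by (rule Wpp_le_cost[OF k1 k2])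
  also have "cost p d \<kappa> = measure_pmf.expectation P (\<lambda>q. d (fst (fst q)) (snd (snd q)) powr p)"
    by (simp add: \<kappa>_def)
  also have "\<dots> = (\<Sum>q\<in>set_pmf P. pmf P q * d (fst (fst q)) (snd (snd q)) powr p)"
    by (rule expectation_sum[OF finP]) auto
  also have "\<dots> \<le> (\<Sum>q\<in>set_pmf P. pmf P q * (a q + b q) powr p)"
  proof (rule sum_mono)
    fix q assume q: "q \<in> set_pmf P"
    have "d (fst (fst q)) (snd (snd q)) \<le> a q + b q"
      unfolding a_def b_def using triangle[OF inS(1)[OF q] inS(2)[OF q] inS(3)[OF q]] P(3)[OF q] by simp
    then show "pmf P q * d (fst (fst q)) (snd (snd q)) powr p \<le> pmf P q * (a q + b q) powr p"
      using p by (intro mult_left_mono powr_mono2) auto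
  qed
  also have "\<dots> \<le> (cost p d \<pi>1 powr (1/p) + cost p d \<pi>2 powr (1/p)) powr p"
    unfolding ca cb using p by (intro minkowski finP) (auto simp: a_def b_def)
  finally have "Wpp p d \<mu> \<rho> \<le> (cost p d \<pi>1 powr (1/p) + cost p d \<pi>2 powr (1/p)) powr p" .
  then have "Wpp p d \<mu> \<rho> powr (1/p) \<le> ((cost p d \<pi>1 powr (1/p) + cost p d \<pi>2 powr (1/p)) powr p) powr (1/p)"
    using p by (intro powr_mono2) (auto simp: Wpp_nonneg)
  then show ?thesis using p by (simp add: W_eq powr_powr_inv)
qed

lemma W_triangle:
  assumes MS: "Metric_space S d" and p: "1 \<le> p"
    and FS: "\<mu> \<in> FS S" "\<nu> \<in> FS S" "\<rho> \<in> FS S"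
  shows "wasserstein p d \<mu> \<rho> \<le> wasserstein p d \<mu> \<nu> + wasserstein p d \<nu> \<rho>"
proof (rule field_le_epsilon)
  fix e :: real assume e: "0 < e"
  obtain \<pi>1 where 1: "map_pmf fst \<pi>1 = \<mu>" "map_pmf snd \<pi>1 = \<nu>" "cost p d \<pi>1 powr (1/p) < wasserstein p d \<mu> \<nu> + e/2"
    using W_approx[of "e/2" p] e p by fastforce
  obtain \<pi>2 where 2: "map_pmf fst \<pi>2 = \<nu>" "map_pmf snd \<pi>2 = \<rho>" "cost p d \<pi>2 powr (1/p) < wasserstein p d \<nu> \<rho> + e/2"
    using W_approx[of "e/2" p] e p by fastforce
  show "wasserstein p d \<mu> \<rho> \<le> wasserstein p d \<mu> \<nu> + wasserstein p d \<nu> \<rho> + e"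
    using W_triangle_cpl[OF MS p FS 1(1,2) 2(1,2)] 1(3) 2(3) by linarith
qed



lemma Wpp_geI:
  assumes "\<And>\<pi>. map_pmf fst \<pi> = \<mu> \<Longrightarrow> map_pmf snd \<pi> = \<nu> \<Longrightarrow> B \<le> cost p d \<pi>"
  shows "B \<le> Wpp p d \<mu> \<nu>"
  unfolding Wpp_def by (rule cInf_greatest[OF Wpp_set_ne]) (use assms in auto)

lemma Wpp_self:
  assumes MS: "Metric_space S d" and FS: "\<mu> \<in> FS S"
  shows "Wpp p d \<mu> \<mu> = 0"
proof -
  interpret Metric_space S d by (rule MS)
  have fin: "finite (set_pmf \<mu>)" and sub: "set_pmf \<mu> \<subseteq> S" using FS by (auto simp: FS_def)
  have "Wpp p d \<mu> \<mu> \<le> cost p d (map_pmf (\<lambda>x. (x,x)) \<mu>)"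
    by (rule Wpp_le_cost) (simp_all add: pmf.map_comp comp_def)
  also have "\<dots> = measure_pmf.expectation \<mu> (\<lambda>x. d x x powr p)" by simp
  also have "\<dots> = (\<Sum>x\<in>set_pmf \<mu>. pmf \<mu> x * d x x powr p)" by (rule expectation_sum[OF fin]) auto
  also have "\<dots> = 0" using sub by (intro sum.neutral) auto
  finally show ?thesis using Wpp_nonneg[of p d \<mu> \<mu>] by linarith
qed

lemma pmf_le_coupling:
  assumes "map_pmf fst \<pi> = \<mu>" "map_pmf snd \<pi> = \<nu>"
  shows "pmf \<mu> x \<le> pmf \<nu> x + measure \<pi> {q. fst q \<noteq> snd q}"
    "pmf \<nu> x \<le> pmf \<mu> x + measure \<pi> {q. fst q \<noteq> snd q}"
proof -
  have "pmf \<mu> x = measure \<pi> (fst -` {x})" using assms by (auto simp: pmf_map)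
  also have "\<dots> \<le> measure \<pi> (snd -` {x} \<union> {q. fst q \<noteq> snd q})"
    by (rule measure_pmf.finite_measure_mono) auto
  also have "\<dots> \<le> measure \<pi> (snd -` {x}) + measure \<pi> {q. fst q \<noteq> snd q}"
    by (rule measure_Un_le) auto
  also have "measure \<pi> (snd -` {x}) = pmf \<nu> x" using assms by (auto simp: pmf_map)
  finally show "pmf \<mu> x \<le> pmf \<nu> x + measure \<pi> {q. fst q \<noteq> snd q}" .
next
  have "pmf \<nu> x = measure \<pi> (snd -` {x})" using assms by (auto simp: pmf_map)
  also have "\<dots> \<le> measure \<pi> (fst -` {x} \<union> {q. fst q \<noteq> snd q})"
    by (rule measure_pmf.finite_measure_mono) auto
  also have "\<dots> \<le> measure \<pi> (fst -` {x}) + measure \<pi> {q. fst q \<noteq> snd q}"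
    by (rule measure_Un_le) auto
  also have "measure \<pi> (fst -` {x}) = pmf \<mu> x" using assms by (auto simp: pmf_map)
  finally show "pmf \<nu> x \<le> pmf \<mu> x + measure \<pi> {q. fst q \<noteq> snd q}" .
qed

lemma Wpp_zero_eq:
  assumes MS: "Metric_space S d" and p: "0 < p" and FS: "\<mu> \<in> FS S" "\<nu> \<in> FS S"
    and z: "Wpp p d \<mu> \<nu> = 0"
  shows "\<mu> = \<nu>"
proof -
  interpret Metric_space S d by (rule MS)
  define T where "T = set_pmf \<mu> \<union> set_pmf \<nu>"
  have finT: "finite T" and TS: "T \<subseteq> S" using FS by (auto simp: FS_def T_def)
  define D where "D = (\<lambda>(x,y). d x y powr p) ` {q \<in> T \<times> T. fst q \<noteq> snd q}"
  define \<delta> where "\<delta> = Min (insert 1 D)"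
  have finD: "finite D" unfolding D_def using finT by auto
  have Dpos: "\<forall>z\<in>D. 0 < z" unfolding D_def using TS by (auto simp: subset_iff)
  have \<delta>pos: "0 < \<delta>" unfolding \<delta>_def using finD Dpos by (simp add: Min_gr_iff)
  have \<delta>le: "\<delta> \<le> d x y powr p" if "x \<in> T" "y \<in> T" "x \<noteq> y" for x y
  proof -
    have "d x y powr p \<in> insert 1 D" unfolding D_def using that by (auto intro: rev_image_eqI[of "(x,y)"])
    then show ?thesis unfolding \<delta>_def using finD by simp
  qed
  have key: "\<delta> * measure \<pi> {q. fst q \<noteq> snd q} \<le> cost p d \<pi>"
    if c: "map_pmf fst \<pi> = \<mu>" "map_pmf snd \<pi> = \<nu>" for \<pi>
  proof -
    let ?E = "{q. fst q \<noteq> snd q}"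
    have sp: "set_pmf \<pi> \<subseteq> T \<times> T" using coupling_set[OF c] T_def by auto
    have fin: "finite (set_pmf \<pi>)" using sp finT by (meson finite_SigmaI finite_subset)
    have "measure \<pi> ?E = measure \<pi> (?E \<inter> set_pmf \<pi>)" by (simp add: measure_Int_set_pmf)
    also have "\<dots> = (\<Sum>q\<in>?E \<inter> set_pmf \<pi>. pmf \<pi> q)" using fin by (simp add: measure_measure_pmf_finite)
    also have "\<dots> = (\<Sum>q\<in>set_pmf \<pi>. pmf \<pi> q * indicator ?E q)"
      using fin by (simp add: sum.inter_restrict Int_commute indicator_def if_distrib cong: if_cong)
    finally have m: "measure \<pi> ?E = (\<Sum>q\<in>set_pmf \<pi>. pmf \<pi> q * indicator ?E q)" .
    have "\<delta> * measure \<pi> ?E = (\<Sum>q\<in>set_pmf \<pi>. pmf \<pi> q * (\<delta> * indicator ?E q))"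
      unfolding m sum_distrib_left by (simp add: mult_ac)
    also have "\<dots> \<le> (\<Sum>q\<in>set_pmf \<pi>. pmf \<pi> q * (case q of (x, y) \<Rightarrow> d x y powr p))"
    proof (rule sum_mono)
      fix q assume q: "q \<in> set_pmf \<pi>"
      show "pmf \<pi> q * (\<delta> * indicator ?E q) \<le> pmf \<pi> q * (case q of (x, y) \<Rightarrow> d x y powr p)"
      proof (cases "fst q = snd q")
        case False
        then have "\<delta> \<le> d (fst q) (snd q) powr p" using q sp by (intro \<delta>le) auto
        then show ?thesis using False by (intro mult_left_mono) (auto simp: split_beta)
      qed (auto simp: split_beta)
    qed
    also have "\<dots> = cost p d \<pi>" by (rule expectation_sum[OF fin, symmetric]) auto
    finally show ?thesis .
  qed
  have "pmf \<mu> x = pmf \<nu> x" for x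
  proof -
    have "\<delta> * (pmf \<mu> x - pmf \<nu> x) \<le> Wpp p d \<mu> \<nu>" "\<delta> * (pmf \<nu> x - pmf \<mu> x) \<le> Wpp p d \<mu> \<nu>"
    proof -
      show "\<delta> * (pmf \<mu> x - pmf \<nu> x) \<le> Wpp p d \<mu> \<nu>"
      proof (rule Wpp_geI)
        fix \<pi> assume c: "map_pmf fst \<pi> = \<mu>" "map_pmf snd \<pi> = \<nu>"
        have "\<delta> * (pmf \<mu> x - pmf \<nu> x) \<le> \<delta> * measure \<pi> {q. fst q \<noteq> snd q}"
          using pmf_le_coupling(1)[OF c, of x] \<delta>pos by (intro mult_left_mono) auto
        then show "\<delta> * (pmf \<mu> x - pmf \<nu> x) \<le> cost p d \<pi>" using key[OF c] by linarith
      qed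
      show "\<delta> * (pmf \<nu> x - pmf \<mu> x) \<le> Wpp p d \<mu> \<nu>"
      proof (rule Wpp_geI)
        fix \<pi> assume c: "map_pmf fst \<pi> = \<mu>" "map_pmf snd \<pi> = \<nu>"
        have "\<delta> * (pmf \<nu> x - pmf \<mu> x) \<le> \<delta> * measure \<pi> {q. fst q \<noteq> snd q}"
          using pmf_le_coupling(2)[OF c, of x] \<delta>pos by (intro mult_left_mono) auto
        then show "\<delta> * (pmf \<nu> x - pmf \<mu> x) \<le> cost p d \<pi>" using key[OF c] by linarith
      qed
    qed
    then have "\<delta> * (pmf \<mu> x - pmf \<nu> x) \<le> 0" "\<delta> * (pmf \<nu> x - pmf \<mu> x) \<le> 0" using z by auto
    then show ?thesis using \<delta>pos mult_pos_pos[of \<delta> "pmf \<mu> x - pmf \<nu> x"] mult_pos_pos[of \<delta> "pmf \<nu> x - pmf \<mu> x"]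
      by linarith
  qed
  then show ?thesis by (rule pmf_eqI)
qed

lemma Metric_FS:
  assumes MS: "Metric_space S d" and p: "1 \<le> p"
  shows "Metric_space (FS S) (wasserstein p d)"
proof
  show "0 \<le> wasserstein p d x y" for x y by (rule W_nonneg)
  show "wasserstein p d x y = wasserstein p d y x" for x y
    unfolding W_eq by (subst Wpp_commute[OF Metric_space.commute[OF MS]]) (rule refl)
  show "wasserstein p d x y = 0 \<longleftrightarrow> x = y" if "x \<in> FS S" "y \<in> FS S" for x y
  proof -
    have "wasserstein p d x y = 0 \<longleftrightarrow> Wpp p d x y = 0" unfolding W_eq by simp
    moreover have "Wpp p d x y = 0 \<Longrightarrow> x = y" using Wpp_zero_eq[OF MS _ that, of p] p by simp
    moreover have "x = y \<Longrightarrow> Wpp p d x y = 0" using Wpp_self[OF MS that(1), of p] by simp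
    ultimately show ?thesis by blast
  qed
  show "wasserstein p d x z \<le> wasserstein p d x y + wasserstein p d y z"
    if "x \<in> FS S" "y \<in> FS S" "z \<in> FS S" for x y z
    by (rule W_triangle[OF MS p that])
qed



lemma max_dist_eq: "max_dist e1 e2 x y = max (e1 (fst x) (fst y)) (e2 (snd x) (snd y))"
  by (simp add: max_dist_def split_beta)

lemma Metric_max:
  assumes "Metric_space X e1" "Metric_space Y e2"
  shows "Metric_space (X \<times> Y) (max_dist e1 e2)"
proof -
  interpret X: Metric_space X e1 by fact
  interpret Y: Metric_space Y e2 by fact
  show ?thesis
  proof
    show "0 \<le> max_dist e1 e2 x y" for x y by (simp add: max_dist_eq le_max_iff_disj)
    show "max_dist e1 e2 x y = max_dist e1 e2 y x" for x y by (simp add: max_dist_eq X.commute Y.commute)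
    show "max_dist e1 e2 x y = 0 \<longleftrightarrow> x = y" if "x \<in> X \<times> Y" "y \<in> X \<times> Y" for x y
    proof -
      have "max_dist e1 e2 x y = 0 \<longleftrightarrow> e1 (fst x) (fst y) = 0 \<and> e2 (snd x) (snd y) = 0"
        using X.nonneg[of "fst x" "fst y"] Y.nonneg[of "snd x" "snd y"] by (auto simp: max_dist_eq max_def intro: antisym X.nonneg Y.nonneg)
      also have "\<dots> \<longleftrightarrow> fst x = fst y \<and> snd x = snd y"
        using that X.zero[of "fst x" "fst y"] Y.zero[of "snd x" "snd y"] by (auto simp: mem_Times_iff)
      finally show ?thesis by (simp add: prod_eq_iff)
    qed
    show "max_dist e1 e2 x z \<le> max_dist e1 e2 x y + max_dist e1 e2 y z"
      if "x \<in> X \<times> Y" "y \<in> X \<times> Y" "z \<in> X \<times> Y" for x y z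
      using that X.triangle[of "fst x" "fst y" "fst z"] Y.triangle[of "snd x" "snd y" "snd z"]
      by (auto simp: max_dist_eq mem_Times_iff)
  qed
qed

lemma expectation_mono_fin:
  fixes f g :: "'a \<Rightarrow> real"
  assumes "finite (set_pmf \<pi>)" "\<And>q. q \<in> set_pmf \<pi> \<Longrightarrow> f q \<le> g q"
  shows "measure_pmf.expectation \<pi> f \<le> measure_pmf.expectation \<pi> g"
  using assms by (subst (1 2) expectation_sum[OF assms(1) order.refl]) (auto intro!: sum_mono mult_left_mono)

lemma Wpp_fst_le:
  assumes "\<And>x y. 0 \<le> d1 x y" "finite (set_pmf \<mu>)" "finite (set_pmf \<nu>)" "0 \<le> p"
  shows "Wpp p d1 (map_pmf fst \<mu>) (map_pmf fst \<nu>) \<le> Wpp p (max_dist d1 d2) \<mu> \<nu>"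
proof (rule Wpp_leI)
  fix e :: real assume "0 < e"
  then obtain \<pi> where \<pi>: "map_pmf fst \<pi> = \<mu>" "map_pmf snd \<pi> = \<nu>" "cost p (max_dist d1 d2) \<pi> < Wpp p (max_dist d1 d2) \<mu> \<nu> + e"
    using Wpp_approx by blast
  have fin: "finite (set_pmf \<pi>)" using coupling_finite[OF \<pi>(1,2) assms(2,3)] .
  define \<pi>' where "\<pi>' = map_pmf (\<lambda>q. (fst (fst q), fst (snd q))) \<pi>"
  have m: "map_pmf fst \<pi>' = map_pmf fst \<mu>" "map_pmf snd \<pi>' = map_pmf fst \<nu>"
    using \<pi> by (simp_all add: \<pi>'_def pmf.map_comp comp_def flip: \<pi>(1,2))
  have "cost p d1 \<pi>' = measure_pmf.expectation \<pi> (\<lambda>q. d1 (fst (fst q)) (fst (snd q)) powr p)"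
    by (simp add: \<pi>'_def)
  also have "\<dots> \<le> cost p (max_dist d1 d2) \<pi>"
    using fin assms(1,4) by (auto intro!: expectation_mono_fin powr_mono2 simp: split_beta max_dist_eq)
  finally show "\<exists>\<pi>. map_pmf fst \<pi> = map_pmf fst \<mu> \<and> map_pmf snd \<pi> = map_pmf fst \<nu> \<and>
      cost p d1 \<pi> \<le> Wpp p (max_dist d1 d2) \<mu> \<nu> + e"
    using m \<pi>(3) by (intro exI[of _ \<pi>']) auto
qed

lemma Wpp_snd_le:
  assumes "\<And>x y. 0 \<le> d2 x y" "finite (set_pmf \<mu>)" "finite (set_pmf \<nu>)" "0 \<le> p"
  shows "Wpp p d2 (map_pmf snd \<mu>) (map_pmf snd \<nu>) \<le> Wpp p (max_dist d1 d2) \<mu> \<nu>"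
proof (rule Wpp_leI)
  fix e :: real assume "0 < e"
  then obtain \<pi> where \<pi>: "map_pmf fst \<pi> = \<mu>" "map_pmf snd \<pi> = \<nu>" "cost p (max_dist d1 d2) \<pi> < Wpp p (max_dist d1 d2) \<mu> \<nu> + e"
    using Wpp_approx by blast
  have fin: "finite (set_pmf \<pi>)" using coupling_finite[OF \<pi>(1,2) assms(2,3)] .
  define \<pi>' where "\<pi>' = map_pmf (\<lambda>q. (snd (fst q), snd (snd q))) \<pi>"
  have m: "map_pmf fst \<pi>' = map_pmf snd \<mu>" "map_pmf snd \<pi>' = map_pmf snd \<nu>"
    using \<pi> by (simp_all add: \<pi>'_def pmf.map_comp comp_def flip: \<pi>(1,2))
  have "cost p d2 \<pi>' = measure_pmf.expectation \<pi> (\<lambda>q. d2 (snd (fst q)) (snd (snd q)) powr p)"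
    by (simp add: \<pi>'_def)
  also have "\<dots> \<le> cost p (max_dist d1 d2) \<pi>"
    using fin assms(1,4) by (auto intro!: expectation_mono_fin powr_mono2 simp: split_beta max_dist_eq)
  finally show "\<exists>\<pi>. map_pmf fst \<pi> = map_pmf snd \<mu> \<and> map_pmf snd \<pi> = map_pmf snd \<nu> \<and>
      cost p d2 \<pi> \<le> Wpp p (max_dist d1 d2) \<mu> \<nu> + e"
    using m \<pi>(3) by (intro exI[of _ \<pi>']) auto
qed

lemma max_powr_le: "0 \<le> x \<Longrightarrow> 0 \<le> y \<Longrightarrow> 0 \<le> (p::real) \<Longrightarrow> max x y powr p \<le> x powr p + y powr p"
  by (cases "x \<le> y") (auto simp: max_def)

lemma Wpp_pair_le:
  assumes "\<And>x y. 0 \<le> d1 x y" "\<And>x y. 0 \<le> d2 x y" "0 \<le> p"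
    and fin: "finite (set_pmf a)" "finite (set_pmf a')" "finite (set_pmf b)" "finite (set_pmf b')"
  shows "Wpp p (max_dist d1 d2) (pair_pmf a b) (pair_pmf a' b') \<le> Wpp p d1 a a' + Wpp p d2 b b'"
proof (rule Wpp_leI)
  fix e :: real assume e: "0 < e"
  obtain \<pi>1 where 1: "map_pmf fst \<pi>1 = a" "map_pmf snd \<pi>1 = a'" "cost p d1 \<pi>1 < Wpp p d1 a a' + e/2"
    using Wpp_approx[of "e/2"] e by fastforce
  obtain \<pi>2 where 2: "map_pmf fst \<pi>2 = b" "map_pmf snd \<pi>2 = b'" "cost p d2 \<pi>2 < Wpp p d2 b b' + e/2"
    using Wpp_approx[of "e/2"] e by fastforce
  have f1: "finite (set_pmf \<pi>1)" using coupling_finite[OF 1(1,2) fin(1,2)] .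
  have f2: "finite (set_pmf \<pi>2)" using coupling_finite[OF 2(1,2) fin(3,4)] .
  have fP: "finite (set_pmf (pair_pmf \<pi>1 \<pi>2))" using f1 f2 by simp
  define \<kappa> where "\<kappa> = map_pmf (\<lambda>(u, v). ((fst u, fst v), (snd u, snd v))) (pair_pmf \<pi>1 \<pi>2)"
  have k1: "map_pmf fst \<kappa> = pair_pmf a b"
  proof -
    have "map_pmf fst \<kappa> = map_pmf (\<lambda>(u, v). (fst u, fst v)) (pair_pmf \<pi>1 \<pi>2)"
      unfolding \<kappa>_def pmf.map_comp by (intro map_pmf_cong) auto
    also have "\<dots> = pair_pmf (map_pmf fst \<pi>1) (map_pmf fst \<pi>2)" by (rule map_pair)
    finally show ?thesis using 1 2 by simp
  qed
  have k2: "map_pmf snd \<kappa> = pair_pmf a' b'"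
  proof -
    have "map_pmf snd \<kappa> = map_pmf (\<lambda>(u, v). (snd u, snd v)) (pair_pmf \<pi>1 \<pi>2)"
      unfolding \<kappa>_def pmf.map_comp by (intro map_pmf_cong) auto
    also have "\<dots> = pair_pmf (map_pmf snd \<pi>1) (map_pmf snd \<pi>2)" by (rule map_pair)
    finally show ?thesis using 1 2 by simp
  qed
  have "cost p (max_dist d1 d2) \<kappa> = measure_pmf.expectation (pair_pmf \<pi>1 \<pi>2)
      (\<lambda>q. max (d1 (fst (fst q)) (snd (fst q))) (d2 (fst (snd q)) (snd (snd q))) powr p)"
    by (simp add: \<kappa>_def split_beta max_dist_eq)
  also have "\<dots> \<le> measure_pmf.expectation (pair_pmf \<pi>1 \<pi>2)
      (\<lambda>q. d1 (fst (fst q)) (snd (fst q)) powr p + d2 (fst (snd q)) (snd (snd q)) powr p)"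
    using fP assms(1-3) by (intro expectation_mono_fin max_powr_le) auto
  also have "\<dots> = measure_pmf.expectation (pair_pmf \<pi>1 \<pi>2) (\<lambda>q. d1 (fst (fst q)) (snd (fst q)) powr p)
      + measure_pmf.expectation (pair_pmf \<pi>1 \<pi>2) (\<lambda>q. d2 (fst (snd q)) (snd (snd q)) powr p)"
    using fP by (intro Bochner_Integration.integral_add integrable_measure_pmf_finite)
  also have "measure_pmf.expectation (pair_pmf \<pi>1 \<pi>2) (\<lambda>q. d1 (fst (fst q)) (snd (fst q)) powr p) = cost p d1 \<pi>1"
    by (subst (2) map_fst_pair_pmf[of \<pi>1 \<pi>2, symmetric]) (simp add: split_beta)
  also have "measure_pmf.expectation (pair_pmf \<pi>1 \<pi>2) (\<lambda>q. d2 (fst (snd q)) (snd (snd q)) powr p) = cost p d2 \<pi>2"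
    by (subst (2) map_snd_pair_pmf[of \<pi>1 \<pi>2, symmetric]) (simp add: split_beta)
  finally show "\<exists>\<pi>. map_pmf fst \<pi> = pair_pmf a b \<and> map_pmf snd \<pi> = pair_pmf a' b' \<and>
      cost p (max_dist d1 d2) \<pi> \<le> Wpp p d1 a a' + Wpp p d2 b b' + e"
    using k1 k2 1(3) 2(3) by (intro exI[of _ \<kappa>]) auto
qed

lemma Wpp_mix_le:
  assumes st: "0 \<le> s" "s \<le> 1"
    and fin: "finite (set_pmf a)" "finite (set_pmf a')" "finite (set_pmf b)" "finite (set_pmf b')"
  shows "Wpp p d (mix s a b) (mix s a' b') \<le> s * Wpp p d a a' + (1 - s) * Wpp p d b b'"
proof (rule Wpp_leI)
  fix e :: real assume e: "0 < e"
  obtain \<pi>1 where 1: "map_pmf fst \<pi>1 = a" "map_pmf snd \<pi>1 = a'" "cost p d \<pi>1 < Wpp p d a a' + e"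
    using Wpp_approx[of "e"] e by fastforce
  obtain \<pi>2 where 2: "map_pmf fst \<pi>2 = b" "map_pmf snd \<pi>2 = b'" "cost p d \<pi>2 < Wpp p d b b' + e"
    using Wpp_approx[of "e"] e by fastforce
  have f1: "finite (set_pmf \<pi>1)" using coupling_finite[OF 1(1,2) fin(1,2)] .
  have f2: "finite (set_pmf \<pi>2)" using coupling_finite[OF 2(1,2) fin(3,4)] .
  have m: "map_pmf fst (mix s \<pi>1 \<pi>2) = mix s a b" "map_pmf snd (mix s \<pi>1 \<pi>2) = mix s a' b'"
    using 1 2 by (simp_all add: map_mix)
  have "cost p d (mix s \<pi>1 \<pi>2) = s * cost p d \<pi>1 + (1 - s) * cost p d \<pi>2"
    by (rule expectation_mix[OF f1 f2 st])
  also have "\<dots> \<le> s * (Wpp p d a a' + e) + (1 - s) * (Wpp p d b b' + e)"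
    using 1(3) 2(3) st by (intro add_mono mult_left_mono) auto
  also have "\<dots> = s * Wpp p d a a' + (1 - s) * Wpp p d b b' + e" by (simp add: algebra_simps)
  finally show "\<exists>\<pi>. map_pmf fst \<pi> = mix s a b \<and> map_pmf snd \<pi> = mix s a' b' \<and>
      cost p d \<pi> \<le> s * Wpp p d a a' + (1 - s) * Wpp p d b b' + e"
    using m by blast
qed



lemma FS_mix: "a \<in> FS S \<Longrightarrow> b \<in> FS S \<Longrightarrow> mix t a b \<in> FS S"
  using set_mix[of t a b] unfolding FS_def by (auto intro: finite_subset)

lemma Wpp_mix_param:
  assumes MS: "Metric_space S d" and ab: "a \<in> FS S" "b \<in> FS S"
    and st: "0 \<le> s" "s \<le> 1" "0 \<le> t" "t \<le> 1"
  shows "Wpp p d (mix s a b) (mix t a b) \<le> \<bar>s - t\<bar> * Wpp p d a b"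
proof -
  define c where "c = mix t a b"
  have cF: "c \<in> FS S" unfolding c_def by (rule FS_mix[OF ab])
  have fa: "finite (set_pmf a)" and fb: "finite (set_pmf b)" and fc: "finite (set_pmf c)"
    using ab cF by (auto simp: FS_def)
  have W0: "Wpp p d x x = 0" if "x \<in> FS S" for x using Wpp_self[OF MS that] .
  have Wnn: "0 \<le> Wpp p d a b" by (rule Wpp_nonneg)
  show ?thesis
  proof (cases "t \<le> s")
    case ts: True
    show ?thesis
    proof (cases "t = 1")
      case True
      then have "s = 1" using ts st by simp
      then show ?thesis using True W0[OF ab(1)] by simp
    next
      case False
      then have t1: "t < 1" using st by simp
      define u where "u = (s - t) / (1 - t)"
      have u: "0 \<le> u" "u \<le> 1" unfolding u_def using t1 ts st by (auto simp: field_simps)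
      have hu: "(1 - u) * (1 - t) = 1 - s" using t1 by (simp add: u_def field_simps)
      have hu2: "u + (1 - u) * t = s" using hu by (simp add: algebra_simps)
      have e1: "mix s a b = mix u a c"
      proof (rule pmf_eqI)
        fix i
        have "pmf (mix u a c) i = u * pmf a i + (1 - u) * (t * pmf a i + (1 - t) * pmf b i)"
          using u st by (simp add: pmf_mix c_def)
        also have "\<dots> = (u + (1 - u) * t) * pmf a i + ((1 - u) * (1 - t)) * pmf b i"
          by (simp add: algebra_simps)
        also have "\<dots> = pmf (mix s a b) i" using st by (simp add: hu hu2 pmf_mix)
        finally show "pmf (mix s a b) i = pmf (mix u a c) i" by simp
      qed
      have "Wpp p d (mix s a b) (mix t a b) = Wpp p d (mix u a c) (mix u c c)"
        by (simp add: e1 c_def)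
      also have "\<dots> \<le> u * Wpp p d a c + (1 - u) * Wpp p d c c"
        by (rule Wpp_mix_le[OF u fa fc fc fc])
      also have "\<dots> = u * Wpp p d a c" using W0[OF cF] by simp
      also have "Wpp p d a c = Wpp p d (mix t a a) (mix t a b)" by (simp add: c_def)
      also have "\<dots> \<le> t * Wpp p d a a + (1 - t) * Wpp p d a b"
        by (rule Wpp_mix_le[OF st(3,4) fa fa fa fb])
      also have "\<dots> = (1 - t) * Wpp p d a b" using W0[OF ab(1)] by simp
      finally have "Wpp p d (mix s a b) (mix t a b) \<le> u * ((1 - t) * Wpp p d a b)"
        using u by (simp add: mult_left_mono)
      also have "\<dots> = \<bar>s - t\<bar> * Wpp p d a b" using t1 ts by (simp add: u_def)
      finally show ?thesis .
    qed
  next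
    case st': False
    show ?thesis
    proof (cases "t = 0")
      case True
      then have "s = 0" using st' st by simp
      then show ?thesis using True W0[OF ab(2)] by simp
    next
      case False
      then have t0: "0 < t" using st by simp
      define v where "v = (t - s) / t"
      have v: "0 \<le> v" "v \<le> 1" unfolding v_def using t0 st' st by (auto simp: field_simps)
      have hv: "(1 - v) * t = s" using t0 by (simp add: v_def field_simps)
      have hv2: "v + (1 - v) * (1 - t) = 1 - s" using hv by (simp add: algebra_simps)
      have e1: "mix s a b = mix v b c"
      proof (rule pmf_eqI)
        fix i
        have "pmf (mix v b c) i = v * pmf b i + (1 - v) * (t * pmf a i + (1 - t) * pmf b i)"
          using v st by (simp add: pmf_mix c_def)
        also have "\<dots> = ((1 - v) * t) * pmf a i + (v + (1 - v) * (1 - t)) * pmf b i"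
          by (simp add: algebra_simps)
        also have "\<dots> = pmf (mix s a b) i" using st by (simp add: hv hv2 pmf_mix)
        finally show "pmf (mix s a b) i = pmf (mix v b c) i" by simp
      qed
      have "Wpp p d (mix s a b) (mix t a b) = Wpp p d (mix v b c) (mix v c c)"
        by (simp add: e1 c_def)
      also have "\<dots> \<le> v * Wpp p d b c + (1 - v) * Wpp p d c c"
        by (rule Wpp_mix_le[OF v fb fc fc fc])
      also have "\<dots> = v * Wpp p d b c" using W0[OF cF] by simp
      also have "Wpp p d b c = Wpp p d (mix t b b) (mix t a b)" by (simp add: c_def)
      also have "\<dots> \<le> t * Wpp p d b a + (1 - t) * Wpp p d b b"
        by (rule Wpp_mix_le[OF st(3,4) fb fa fb fb])
      also have "\<dots> = t * Wpp p d a b" using W0[OF ab(2)] Wpp_commute[of d p b a] Metric_space.commute[OF MS] by simp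
      finally have "Wpp p d (mix s a b) (mix t a b) \<le> v * (t * Wpp p d a b)"
        using v by (simp add: mult_left_mono)
      also have "\<dots> = \<bar>s - t\<bar> * Wpp p d a b" using t0 st' by (simp add: v_def)
      finally show ?thesis .
    qed
  qed
qed



lemma W_mono_Wpp: "Wpp p d1 a b \<le> Wpp p d2 c e \<Longrightarrow> 0 < p \<Longrightarrow> wasserstein p d1 a b \<le> wasserstein p d2 c e"
  unfolding W_eq by (intro powr_mono2) (auto simp: Wpp_nonneg)

lemma main_generic:
  fixes K :: "('a \<times> 'b) set set" and K1 :: "'a set set" and K2 :: "'b set set"
  assumes MS1: "Metric_space M1 d1" and MS2: "Metric_space M2 d2" and p: "1 \<le> p"
    and Ksub: "\<And>\<sigma>. \<sigma> \<in> K \<Longrightarrow> \<sigma> \<subseteq> M1 \<times> M2"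
    and K1sub: "\<And>\<sigma>. \<sigma> \<in> K1 \<Longrightarrow> \<sigma> \<subseteq> M1"
    and K2sub: "\<And>\<sigma>. \<sigma> \<in> K2 \<Longrightarrow> \<sigma> \<subseteq> M2"
    and proj1: "\<And>\<sigma>. \<sigma> \<in> K \<Longrightarrow> finite \<sigma> \<Longrightarrow> fst ` \<sigma> \<in> K1"
    and proj2: "\<And>\<sigma>. \<sigma> \<in> K \<Longrightarrow> finite \<sigma> \<Longrightarrow> snd ` \<sigma> \<in> K2"
    and prodK: "\<And>\<sigma>1 \<sigma>2. \<sigma>1 \<in> K1 \<Longrightarrow> \<sigma>2 \<in> K2 \<Longrightarrow> finite \<sigma>1 \<Longrightarrow> finite \<sigma>2 \<Longrightarrow> \<sigma>1 \<times> \<sigma>2 \<in> K"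
    and down: "\<And>\<sigma> \<tau>. \<sigma> \<in> K \<Longrightarrow> finite \<sigma> \<Longrightarrow> \<tau> \<subseteq> \<sigma> \<Longrightarrow> \<tau> \<noteq> {} \<Longrightarrow> \<tau> \<in> K"
  shows "thickening_top p (max_dist d1 d2) K homotopy_equivalent_space prod_thickening_top p d1 K1 d2 K2"
proof -
  let ?dd = "max_dist d1 d2"
  have p0: "0 < p" using p by simp
  have MS: "Metric_space (M1 \<times> M2) ?dd" by (rule Metric_max[OF MS1 MS2])
  define A where "A = metric_thickening K"
  define B where "B = metric_thickening K1 \<times> metric_thickening K2"
  have AFS: "A \<subseteq> FS (M1 \<times> M2)" using Ksub unfolding A_def metric_thickening_def FS_def by auto
  have A1FS: "metric_thickening K1 \<subseteq> FS M1" using K1sub unfolding metric_thickening_def FS_def by auto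
  have A2FS: "metric_thickening K2 \<subseteq> FS M2" using K2sub unfolding metric_thickening_def FS_def by auto
  have MA: "Metric_space A (wasserstein p ?dd)"
    by (rule Metric_space.subspace[OF Metric_FS[OF MS p] AFS])
  have MA1: "Metric_space (metric_thickening K1) (wasserstein p d1)"
    by (rule Metric_space.subspace[OF Metric_FS[OF MS1 p] A1FS])
  have MA2: "Metric_space (metric_thickening K2) (wasserstein p d2)"
    by (rule Metric_space.subspace[OF Metric_FS[OF MS2 p] A2FS])
  have MB: "Metric_space B (max_dist (wasserstein p d1) (wasserstein p d2))"
    unfolding B_def by (rule Metric_max[OF MA1 MA2])
  interpret MA: Metric_space A "wasserstein p ?dd" by (rule MA)
  interpret MB: Metric_space B "max_dist (wasserstein p d1) (wasserstein p d2)" by (rule MB)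
  have d1nn: "\<And>x y. 0 \<le> d1 x y" using Metric_space.nonneg[OF MS1] .
  have d2nn: "\<And>x y. 0 \<le> d2 x y" using Metric_space.nonneg[OF MS2] .
  have finA: "finite (set_pmf \<mu>)" if "\<mu> \<in> A" for \<mu> using that by (simp add: A_def metric_thickening_def)
  define F where "F = (\<lambda>\<mu>::('a \<times> 'b) pmf. (map_pmf fst \<mu>, map_pmf snd \<mu>))"
  define G where "G = (\<lambda>q::'a pmf \<times> 'b pmf. pair_pmf (fst q) (snd q))"
  define H where "H = (\<lambda>(t::real, \<mu>). mix t \<mu> (G (F \<mu>)))"
  have Fin: "F \<mu> \<in> B" if "\<mu> \<in> A" for \<mu>
    using that proj1 proj2 by (auto simp: F_def B_def A_def metric_thickening_def)
  have Gin: "G q \<in> A" if "q \<in> B" for q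
    using that prodK by (auto simp: G_def B_def A_def metric_thickening_def)
  have GFset: "set_pmf (G (F \<mu>)) = fst ` set_pmf \<mu> \<times> snd ` set_pmf \<mu>" for \<mu>
    by (simp add: G_def F_def)
  have Hin: "H (t, \<mu>) \<in> A" if "\<mu> \<in> A" for t \<mu>
  proof -
    have fin: "finite (set_pmf \<mu>)" and K: "set_pmf \<mu> \<in> K" using that by (auto simp: A_def metric_thickening_def)
    have PK: "fst ` set_pmf \<mu> \<times> snd ` set_pmf \<mu> \<in> K" using K fin proj1 proj2 prodK by simp
    have sub: "set_pmf (H (t, \<mu>)) \<subseteq> fst ` set_pmf \<mu> \<times> snd ` set_pmf \<mu>"
    proof -
      have S_sub: "set_pmf \<mu> \<subseteq> fst ` set_pmf \<mu> \<times> snd ` set_pmf \<mu>"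
        by (rule subsetI, unfold mem_Times_iff) auto
      show ?thesis using set_mix[of t \<mu> "G (F \<mu>)"] GFset[of \<mu>] S_sub unfolding H_def prod.case by blast
    qed
    have "finite (fst ` set_pmf \<mu> \<times> snd ` set_pmf \<mu>)" using fin by simp
    then show ?thesis using sub PK down[OF PK] set_pmf_not_empty[of "H (t, \<mu>)"]
      by (auto simp: A_def metric_thickening_def intro: finite_subset)
  qed
  have FG: "F (G q) = q" for q by (simp add: F_def G_def map_fst_pair_pmf map_snd_pair_pmf)
  have WppF1: "Wpp p d1 (fst (F \<mu>)) (fst (F \<nu>)) \<le> Wpp p ?dd \<mu> \<nu>" if "\<mu> \<in> A" "\<nu> \<in> A" for \<mu> \<nu>
    unfolding F_def using Wpp_fst_le[OF d1nn finA[OF that(1)] finA[OF that(2)]] p0 by simp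
  have WppF2: "Wpp p d2 (snd (F \<mu>)) (snd (F \<nu>)) \<le> Wpp p ?dd \<mu> \<nu>" if "\<mu> \<in> A" "\<nu> \<in> A" for \<mu> \<nu>
    unfolding F_def using Wpp_snd_le[OF d2nn finA[OF that(1)] finA[OF that(2)]] p0 by simp
  have finB1: "finite (set_pmf (fst q))" "finite (set_pmf (snd q))" if "q \<in> B" for q
    using that by (auto simp: B_def metric_thickening_def)
  have WppG: "Wpp p ?dd (G q) (G q') \<le> Wpp p d1 (fst q) (fst q') + Wpp p d2 (snd q) (snd q')"
    if "q \<in> B" "q' \<in> B" for q q'
    unfolding G_def using Wpp_pair_le[OF d1nn d2nn _ finB1(1)[OF that(1)] finB1(1)[OF that(2)] finB1(2)[OF that(1)] finB1(2)[OF that(2)]] p0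
    by simp
  have contF: "continuous_map MA.mtopology MB.mtopology F"
    unfolding MA.metric_continuous_map[OF MB]
  proof (intro conjI ballI allI impI)
    show "F ` A \<subseteq> B" using Fin by auto
    fix \<mu> and e :: real assume \<mu>: "\<mu> \<in> A" and e: "0 < e"
    show "\<exists>\<delta>>0. \<forall>\<nu>. \<nu> \<in> A \<and> wasserstein p ?dd \<mu> \<nu> < \<delta> \<longrightarrow>
        max_dist (wasserstein p d1) (wasserstein p d2) (F \<mu>) (F \<nu>) < e"
    proof (intro exI[of _ e] conjI allI impI)
      fix \<nu> assume \<nu>: "\<nu> \<in> A \<and> wasserstein p ?dd \<mu> \<nu> < e"
      have "wasserstein p d1 (fst (F \<mu>)) (fst (F \<nu>)) \<le> wasserstein p ?dd \<mu> \<nu>"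
        using W_mono_Wpp[OF WppF1[OF \<mu> conjunct1[OF \<nu>]] p0] .
      moreover have "wasserstein p d2 (snd (F \<mu>)) (snd (F \<nu>)) \<le> wasserstein p ?dd \<mu> \<nu>"
        using W_mono_Wpp[OF WppF2[OF \<mu> conjunct1[OF \<nu>]] p0] .
      ultimately show "max_dist (wasserstein p d1) (wasserstein p d2) (F \<mu>) (F \<nu>) < e"
        using \<nu> by (simp add: max_dist_eq)
    qed (rule e)
  qed
  have contG: "continuous_map MB.mtopology MA.mtopology G"
    unfolding MB.metric_continuous_map[OF MA]
  proof (intro conjI ballI allI impI)
    show "G ` B \<subseteq> A" using Gin by auto
    fix q and e :: real assume q: "q \<in> B" and e: "0 < e"
    define \<delta> where "\<delta> = (e powr p / 2) powr (1/p)"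
    have \<delta>0: "0 < \<delta>" unfolding \<delta>_def using e by simp
    have \<delta>p: "\<delta> powr p = e powr p / 2" unfolding \<delta>_def using e p0 by (simp add: powr_inv_powr)
    show "\<exists>\<delta>>0. \<forall>q'. q' \<in> B \<and> max_dist (wasserstein p d1) (wasserstein p d2) q q' < \<delta> \<longrightarrow>
        wasserstein p ?dd (G q) (G q') < e"
    proof (intro exI[of _ \<delta>] conjI allI impI \<delta>0)
      fix q' assume q': "q' \<in> B \<and> max_dist (wasserstein p d1) (wasserstein p d2) q q' < \<delta>"
      then have "wasserstein p d1 (fst q) (fst q') < \<delta>" "wasserstein p d2 (snd q) (snd q') < \<delta>"
        by (auto simp: max_dist_eq)
      then have "Wpp p d1 (fst q) (fst q') < e powr p / 2" "Wpp p d2 (snd q) (snd q') < e powr p / 2"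
        using W_lt_iff[OF \<delta>0 p0] \<delta>p by auto
      then have "Wpp p ?dd (G q) (G q') < e powr p"
        using WppG[OF q conjunct1[OF q']] by linarith
      then show "wasserstein p ?dd (G q) (G q') < e" using W_lt_iff[OF e p0, of ?dd "G q" "G q'"] by blast
    qed
  qed
  have contH: "continuous_map (prod_topology (top_of_set {0..1}) MA.mtopology) MA.mtopology H"
    unfolding MA.continuous_map_to_metric
  proof (intro ballI allI impI)
    fix x and e :: real assume x: "x \<in> topspace (prod_topology (top_of_set {0..1::real}) MA.mtopology)" and e: "0 < e"
    obtain t \<mu> where x_eq: "x = (t, \<mu>)" by (cases x)
    have t: "0 \<le> t" "t \<le> 1" and \<mu>: "\<mu> \<in> A" using x by (auto simp: x_eq)
    have \<mu>F: "\<mu> \<in> FS (M1 \<times> M2)" using \<mu> AFS by auto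
    have cF: "\<nu> \<in> A \<Longrightarrow> G (F \<nu>) \<in> FS (M1 \<times> M2)" for \<nu> using Gin[OF Fin, of \<nu>] AFS by blast
    define C where "C = Wpp p ?dd \<mu> (G (F \<mu>))"
    have C0: "0 \<le> C" unfolding C_def by (rule Wpp_nonneg)
    define \<eta> where "\<eta> = (e/2) powr p"
    have \<eta>0: "0 < \<eta>" unfolding \<eta>_def using e by simp
    define \<delta>1 where "\<delta>1 = \<eta> / (C + 1)"
    define \<delta>2 where "\<delta>2 = (\<eta>/3) powr (1/p)"
    have \<delta>1: "0 < \<delta>1" unfolding \<delta>1_def using \<eta>0 C0 by simp
    have \<delta>2: "0 < \<delta>2" unfolding \<delta>2_def using \<eta>0 by simp
    have \<delta>2p: "\<delta>2 powr p = \<eta> / 3" unfolding \<delta>2_def using \<eta>0 p0 by (simp add: powr_inv_powr)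
    define U where "U = ({0..1} \<inter> ball t \<delta>1) \<times> MA.mball \<mu> \<delta>2"
    have "openin (prod_topology (top_of_set {0..1::real}) MA.mtopology) U"
      unfolding U_def openin_prod_Times_iff by (auto intro!: openin_open_Int)
    moreover have "x \<in> U" unfolding U_def x_eq using t \<mu> \<delta>1 \<delta>2 by auto
    moreover have "H y \<in> MA.mball (H x) e" if y: "y \<in> U" for y
    proof -
      obtain s \<nu> where y_eq: "y = (s, \<nu>)" by (cases y)
      have s: "0 \<le> s" "s \<le> 1" "\<bar>t - s\<bar> < \<delta>1" and \<nu>: "\<nu> \<in> A" "wasserstein p ?dd \<mu> \<nu> < \<delta>2"
        using y by (auto simp: U_def y_eq dist_real_def)
      have \<nu>F: "\<nu> \<in> FS (M1 \<times> M2)" using \<nu> AFS by auto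
      have Wmn: "Wpp p ?dd \<mu> \<nu> < \<eta> / 3" using \<nu>(2) W_lt_iff[OF \<delta>2 p0, of ?dd \<mu> \<nu>] \<delta>2p by simp
      have H1: "H (t, \<mu>) \<in> FS (M1 \<times> M2)" "H (s, \<mu>) \<in> FS (M1 \<times> M2)" "H (s, \<nu>) \<in> FS (M1 \<times> M2)"
        using Hin \<mu> \<nu> AFS by auto
      have "Wpp p ?dd (H (t, \<mu>)) (H (s, \<mu>)) \<le> \<bar>t - s\<bar> * C"
        unfolding H_def C_def by simp (rule Wpp_mix_param[OF MS \<mu>F cF[OF \<mu>] t s(1,2)])
      also have "\<dots> \<le> \<bar>t - s\<bar> * (C + 1)" by (simp add: mult_left_mono)
      also have "\<dots> < \<eta>" using s(3) C0 unfolding \<delta>1_def by (simp add: pos_less_divide_eq)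
      finally have "Wpp p ?dd (H (t, \<mu>)) (H (s, \<mu>)) < (e/2) powr p" unfolding \<eta>_def .
      then have T1: "wasserstein p ?dd (H (t, \<mu>)) (H (s, \<mu>)) < e/2" using W_lt_iff[of "e/2" p ?dd "H (t, \<mu>)" "H (s, \<mu>)"] e p0 by simp
      have "Wpp p ?dd (G (F \<mu>)) (G (F \<nu>)) \<le> Wpp p d1 (fst (F \<mu>)) (fst (F \<nu>)) + Wpp p d2 (snd (F \<mu>)) (snd (F \<nu>))"
        by (rule WppG[OF Fin[OF \<mu>] Fin[OF \<nu>(1)]])
      also have "\<dots> \<le> 2 * Wpp p ?dd \<mu> \<nu>" using WppF1[OF \<mu> \<nu>(1)] WppF2[OF \<mu> \<nu>(1)] by simp
      finally have WG: "Wpp p ?dd (G (F \<mu>)) (G (F \<nu>)) \<le> 2 * Wpp p ?dd \<mu> \<nu>" .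
      have "Wpp p ?dd (H (s, \<mu>)) (H (s, \<nu>)) \<le> s * Wpp p ?dd \<mu> \<nu> + (1 - s) * Wpp p ?dd (G (F \<mu>)) (G (F \<nu>))"
        unfolding H_def using finA[OF \<mu>] finA[OF \<nu>(1)] finA[OF Gin[OF Fin[OF \<mu>]]] finA[OF Gin[OF Fin[OF \<nu>(1)]]]
        by simp (rule Wpp_mix_le[OF s(1,2)])
      also have "\<dots> \<le> Wpp p ?dd \<mu> \<nu> + Wpp p ?dd (G (F \<mu>)) (G (F \<nu>))"
        using s Wpp_nonneg[of p ?dd \<mu> \<nu>] Wpp_nonneg[of p ?dd "G (F \<mu>)" "G (F \<nu>)"]
        by (intro add_mono) (auto intro: mult_left_le_one_le)
      also have "\<dots> < \<eta>" using WG Wmn by linarith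
      finally have "Wpp p ?dd (H (s, \<mu>)) (H (s, \<nu>)) < (e/2) powr p" unfolding \<eta>_def .
      then have T2: "wasserstein p ?dd (H (s, \<mu>)) (H (s, \<nu>)) < e/2" using W_lt_iff[of "e/2" p ?dd "H (s, \<mu>)" "H (s, \<nu>)"] e p0 by simp
      have "wasserstein p ?dd (H (t, \<mu>)) (H (s, \<nu>)) \<le> wasserstein p ?dd (H (t, \<mu>)) (H (s, \<mu>)) + wasserstein p ?dd (H (s, \<mu>)) (H (s, \<nu>))"
        by (rule W_triangle[OF MS p H1])
      then have "wasserstein p ?dd (H (t, \<mu>)) (H (s, \<nu>)) < e" using T1 T2 by linarith
      then show ?thesis using Hin \<mu> \<nu> by (simp add: x_eq y_eq)
    qed
    ultimately show "\<exists>U. openin (prod_topology (top_of_set {0..1}) MA.mtopology) U \<and> x \<in> U \<and> (\<forall>y\<in>U. H y \<in> MA.mball (H x) e)"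
      by blast
  qed
  have hom1: "homotopic_with (\<lambda>x. True) MA.mtopology MA.mtopology (G \<circ> F) id"
    unfolding homotopic_with_def
    by (intro exI[of _ H] conjI contH) (auto simp: H_def)
  have hom2: "homotopic_with (\<lambda>x. True) MB.mtopology MB.mtopology (F \<circ> G) id"
    by (rule homotopic_with_equal) (auto simp: FG intro: continuous_map_compose[OF contG contF])
  have "MA.mtopology homotopy_equivalent_space MB.mtopology"
    unfolding homotopy_equivalent_space_def using contF contG hom1 hom2 by blast
  then show ?thesis unfolding thickening_top_def prod_thickening_top_def A_def B_def .
qed



lemma ereal_max: "ereal (max a b) = max (ereal a) (ereal b)"
  by (cases "a \<le> b") (auto simp: max_def)

lemma ereal_max_le: "ereal (max a b) \<le> r \<longleftrightarrow> ereal a \<le> r \<and> ereal b \<le> r"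
  by (simp add: ereal_max)

lemma ereal_max_less: "ereal (max a b) < r \<longleftrightarrow> ereal a < r \<and> ereal b < r"
  by (simp add: ereal_max)

lemma VR_case:
  assumes "Metric_space M1 d1" "Metric_space M2 d2" "1 \<le> p"
  shows "thickening_top p (max_dist d1 d2) (VR_complex (M1 \<times> M2) (max_dist d1 d2) r)
         homotopy_equivalent_space
           prod_thickening_top p d1 (VR_complex M1 d1 r) d2 (VR_complex M2 d2 r)"
proof (rule main_generic[OF assms])
  show "\<sigma> \<subseteq> M1 \<times> M2" if "\<sigma> \<in> VR_complex (M1 \<times> M2) (max_dist d1 d2) r" for \<sigma>
    using that by (simp add: VR_complex_def)
  show "\<sigma> \<subseteq> M1" if "\<sigma> \<in> VR_complex M1 d1 r" for \<sigma> using that by (simp add: VR_complex_def)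
  show "\<sigma> \<subseteq> M2" if "\<sigma> \<in> VR_complex M2 d2 r" for \<sigma> using that by (simp add: VR_complex_def)
  show "fst ` \<sigma> \<in> VR_complex M1 d1 r" if "\<sigma> \<in> VR_complex (M1 \<times> M2) (max_dist d1 d2) r" for \<sigma>
    using that by (fastforce simp: VR_complex_def max_dist_eq ereal_max_le)
  show "snd ` \<sigma> \<in> VR_complex M2 d2 r" if "\<sigma> \<in> VR_complex (M1 \<times> M2) (max_dist d1 d2) r" for \<sigma>
    using that by (fastforce simp: VR_complex_def max_dist_eq ereal_max_le)
  show "\<sigma>1 \<times> \<sigma>2 \<in> VR_complex (M1 \<times> M2) (max_dist d1 d2) r"
    if "\<sigma>1 \<in> VR_complex M1 d1 r" "\<sigma>2 \<in> VR_complex M2 d2 r" for \<sigma>1 \<sigma>2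
    using that by (auto simp: VR_complex_def max_dist_eq ereal_max_le)
  show "\<tau> \<in> VR_complex (M1 \<times> M2) (max_dist d1 d2) r"
    if "\<sigma> \<in> VR_complex (M1 \<times> M2) (max_dist d1 d2) r" "\<tau> \<subseteq> \<sigma>" "\<tau> \<noteq> {}" for \<sigma> \<tau>
    using that by (auto simp: VR_complex_def intro: finite_subset)
qed

lemma ball_prod:
  "z \<in> metric_ball cl (M1 \<times> M2) (max_dist d1 d2) q r \<longleftrightarrow>
    fst z \<in> metric_ball cl M1 d1 (fst q) r \<and> snd z \<in> metric_ball cl M2 d2 (snd q) r"
  by (cases cl) (auto simp: metric_ball_def max_dist_eq ereal_max_le ereal_max_less mem_Times_iff)

lemma Cech_case:
  assumes "Metric_space M1 d1" "Metric_space M2 d2" "1 \<le> p"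
  shows "thickening_top p (max_dist d1 d2) (Cech_complex cl (M1 \<times> M2) (max_dist d1 d2) r)
         homotopy_equivalent_space
           prod_thickening_top p d1 (Cech_complex cl M1 d1 r) d2 (Cech_complex cl M2 d2 r)"
proof (rule main_generic[OF assms])
  show "\<sigma> \<subseteq> M1 \<times> M2" if "\<sigma> \<in> Cech_complex cl (M1 \<times> M2) (max_dist d1 d2) r" for \<sigma>
    using that by (simp add: Cech_complex_def)
  show "\<sigma> \<subseteq> M1" if "\<sigma> \<in> Cech_complex cl M1 d1 r" for \<sigma> using that by (simp add: Cech_complex_def)
  show "\<sigma> \<subseteq> M2" if "\<sigma> \<in> Cech_complex cl M2 d2 r" for \<sigma> using that by (simp add: Cech_complex_def)
  show "fst ` \<sigma> \<in> Cech_complex cl M1 d1 r" if "\<sigma> \<in> Cech_complex cl (M1 \<times> M2) (max_dist d1 d2) r" for \<sigma>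
  proof -
    have "(\<Inter>q\<in>\<sigma>. metric_ball cl (M1 \<times> M2) (max_dist d1 d2) q r) \<noteq> {}"
      using that by (simp add: Cech_complex_def)
    then obtain z where "z \<in> (\<Inter>q\<in>\<sigma>. metric_ball cl (M1 \<times> M2) (max_dist d1 d2) q r)" by blast
    then have z: "\<And>q. q \<in> \<sigma> \<Longrightarrow> z \<in> metric_ball cl (M1 \<times> M2) (max_dist d1 d2) q r" by blast
    have "fst z \<in> (\<Inter>x\<in>fst ` \<sigma>. metric_ball cl M1 d1 x r)" using z ball_prod by fastforce
    then show ?thesis using that unfolding Cech_complex_def by auto
  qed
  show "snd ` \<sigma> \<in> Cech_complex cl M2 d2 r" if "\<sigma> \<in> Cech_complex cl (M1 \<times> M2) (max_dist d1 d2) r" for \<sigma>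
  proof -
    have "(\<Inter>q\<in>\<sigma>. metric_ball cl (M1 \<times> M2) (max_dist d1 d2) q r) \<noteq> {}"
      using that by (simp add: Cech_complex_def)
    then obtain z where "z \<in> (\<Inter>q\<in>\<sigma>. metric_ball cl (M1 \<times> M2) (max_dist d1 d2) q r)" by blast
    then have z: "\<And>q. q \<in> \<sigma> \<Longrightarrow> z \<in> metric_ball cl (M1 \<times> M2) (max_dist d1 d2) q r" by blast
    have "snd z \<in> (\<Inter>x\<in>snd ` \<sigma>. metric_ball cl M2 d2 x r)" using z ball_prod by fastforce
    then show ?thesis using that unfolding Cech_complex_def by auto
  qed
  show "\<sigma>1 \<times> \<sigma>2 \<in> Cech_complex cl (M1 \<times> M2) (max_dist d1 d2) r"
    if "\<sigma>1 \<in> Cech_complex cl M1 d1 r" "\<sigma>2 \<in> Cech_complex cl M2 d2 r" for \<sigma>1 \<sigma>2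
  proof -
    have "(\<Inter>x\<in>\<sigma>1. metric_ball cl M1 d1 x r) \<noteq> {}" using that(1) by (simp add: Cech_complex_def)
    then obtain z1 where z1: "z1 \<in> (\<Inter>x\<in>\<sigma>1. metric_ball cl M1 d1 x r)" by blast
    have "(\<Inter>x\<in>\<sigma>2. metric_ball cl M2 d2 x r) \<noteq> {}" using that(2) by (simp add: Cech_complex_def)
    then obtain z2 where z2: "z2 \<in> (\<Inter>x\<in>\<sigma>2. metric_ball cl M2 d2 x r)" by blast
    have "(z1, z2) \<in> (\<Inter>q\<in>\<sigma>1 \<times> \<sigma>2. metric_ball cl (M1 \<times> M2) (max_dist d1 d2) q r)"
      using z1 z2 ball_prod by fastforce
    then have ne: "(\<Inter>q\<in>\<sigma>1 \<times> \<sigma>2. metric_ball cl (M1 \<times> M2) (max_dist d1 d2) q r) \<noteq> {}" by blast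
    show ?thesis unfolding Cech_complex_def mem_Collect_eq
      by (intro conjI ne) (use that in \<open>auto simp: Cech_complex_def\<close>)
  qed
  show "\<tau> \<in> Cech_complex cl (M1 \<times> M2) (max_dist d1 d2) r"
    if "\<sigma> \<in> Cech_complex cl (M1 \<times> M2) (max_dist d1 d2) r" "\<tau> \<subseteq> \<sigma>" "\<tau> \<noteq> {}" for \<sigma> \<tau>
  proof -
    have "(\<Inter>q\<in>\<sigma>. metric_ball cl (M1 \<times> M2) (max_dist d1 d2) q r) \<noteq> {}"
      using that(1) by (simp add: Cech_complex_def)
    then obtain z where z: "z \<in> (\<Inter>q\<in>\<sigma>. metric_ball cl (M1 \<times> M2) (max_dist d1 d2) q r)" by blast
    then have "z \<in> (\<Inter>q\<in>\<tau>. metric_ball cl (M1 \<times> M2) (max_dist d1 d2) q r)" using that(2) by auto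
    then show ?thesis using that unfolding Cech_complex_def by (auto intro: finite_subset)
  qed
qed

theorem corollary5p2:
  fixes M1 :: "'a set" and d1 :: "'a \<Rightarrow> 'a \<Rightarrow> real"
    and M2 :: "'b set" and d2 :: "'b \<Rightarrow> 'b \<Rightarrow> real"
    and p :: real and r :: ereal and cl :: bool
  assumes "Metric_space M1 d1" and "Metric_space M2 d2"
    and "1 \<le> p" and "0 \<le> r"
  shows "(thickening_top p (max_dist d1 d2) (VR_complex (M1 \<times> M2) (max_dist d1 d2) r))
         homotopy_equivalent_space
           (prod_thickening_top p d1 (VR_complex M1 d1 r) d2 (VR_complex M2 d2 r))
       \<and> (thickening_top p (max_dist d1 d2) (Cech_complex cl (M1 \<times> M2) (max_dist d1 d2) r))
         homotopy_equivalent_space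
           (prod_thickening_top p d1 (Cech_complex cl M1 d1 r) d2 (Cech_complex cl M2 d2 r))"
  using VR_case[OF assms(1-3)] Cech_case[OF assms(1-3)] by blast


end
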